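(* Let $K\subseteq\mathbb{R}^d$ be a convex body and $\varepsilon>0$. For each $i\in I^\pm$ let $Q_i$ be a set of augmented points of $\overline{\partial}K_i$ that stabs all useful $\varepsilon$-dual caps of $K_i$. For an augmented point $q$ let $H^+(q)$ be the closed upper halfspace bounded by $h(q)$, let $P_i=\bigcap_{q\in Q_i}H^+(q)$ and $P=\bigcap_{i\in I^\pm}P_i$. Then $K\subseteq P$, the Hausdorff distance between $K$ and $P$ is at most $\varepsilon$, and the number of facets of $P$ is at most $\sum_{i\in I^\pm}|Q_i|$.
   Context: For a unit vector $u$, $H^+(u)$ is the closed supporting halfspace of $K$ with outer normal $u$. Let $e_1,\dots,e_d$ be the coordinate unit vectors, $e_{-j}=-e_j$, $I^\pm=\{\pm1,\dots,\pm d\}$, $V_i=\{u\in\mathbb{S}^{d-1}:\langle u,e_i\rangle\ge\langle u,e_j\rangle \ \forall j\in I^\pm, j\neq i\}$, $S_i=\bigcap_{u\in V_i}H^+(u)$. For fixed $i$, $e_i$ is the upward vertical direction, $X_i$ the hyperplane through the origin orthogonal to $e_i$, and $S^\downarrow$ the orthogonal projection onto $X_i$. $K^\downarrow\oplus\alpha$ is the set of points of $X_i$ within distance $\alpha$ of $K^\downarrow$; $K_i^{(\alpha)}=\{x\in S_i:x^\downarrow\in K^\downarrow\oplus\alpha\}$ and $K_i=K_i^{(2\varepsilon)}$; $K_i$ is U-shaped (for every boundary point the upward vertical ray lies in the set). The lower boundary $\overline{\partial}K_i$ is the set of boundary points with a non-vertical supporting hyperplane, each point augmented by a choice $h(q)$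 of non-vertical supporting hyperplane of $K_i$ at $q$. $q-\varepsilon$ is the vertical translate of $q$ downward by $\varepsilon$. The $\varepsilon$-dual cap induced by $q$ is the set of augmented points $p\in\overline{\partial}K_i$ such that $q-\varepsilon$ lies in the closed lower halfspace of $h(p)$. It is useful if its inducing point $q$ lies on the lower boundary of $K_i^{(\varepsilon)}$. A set stabs a collection of dual caps if each dual cap contains at least one of its points. *)

theory Defs
  imports "HOL-Analysis.Analysis" "HOL-Library.Extended_Real"
begin

(* Signed coordinate directions e_{\<pm>j}; the index set I^\<pm> is represented by
   the set of these vectors itself. *)
definition sdirs :: "'a::euclidean_space set" where
  "sdirs = Basis \<union> uminus ` Basis"

definition convex_body :: "'a::euclidean_space set \<Rightarrow> bool" where
  "convex_body K \<longleftrightarrow> compact K \<and> convex K \<and> interior K \<noteq> {}"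

definition supp :: "'a::euclidean_space set \<Rightarrow> 'a \<Rightarrow> real" where
  "supp K u = Sup ((\<lambda>x. u \<bullet> x) ` K)"

definition supp_halfspace :: "'a::euclidean_space set \<Rightarrow> 'a \<Rightarrow> 'a set" where
  "supp_halfspace K u = {x. u \<bullet> x \<le> supp K u}"

definition Vcone :: "'a::euclidean_space \<Rightarrow> 'a set" where
  "Vcone e = {u. norm u = 1 \<and> (\<forall>e'\<in>sdirs. e' \<noteq> e \<longrightarrow> u \<bullet> e' \<le> u \<bullet> e)}"

definition Sreg :: "'a::euclidean_space set \<Rightarrow> 'a \<Rightarrow> 'a set" where
  "Sreg K e = (\<Inter>u\<in>Vcone e. supp_halfspace K u)"

definition vproj :: "'a::euclidean_space \<Rightarrow> 'a \<Rightarrow> 'a" where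
  "vproj e x = x - (x \<bullet> e) *\<^sub>R e"

definition proj_nbhd :: "'a::euclidean_space set \<Rightarrow> 'a \<Rightarrow> real \<Rightarrow> 'a set" where
  "proj_nbhd K e \<alpha> = {y. y \<bullet> e = 0 \<and> (\<exists>k\<in>K. dist y (vproj e k) \<le> \<alpha>)}"

definition Kreg :: "'a::euclidean_space set \<Rightarrow> 'a \<Rightarrow> real \<Rightarrow> 'a set" where
  "Kreg K e \<alpha> = {x \<in> Sreg K e. vproj e x \<in> proj_nbhd K e \<alpha>}"

(* n is the outer normal of a non-vertical supporting hyperplane of A at p
   (the vertical axis being the line spanned by e) *)
definition nv_support :: "'a::euclidean_space set \<Rightarrow> 'a \<Rightarrow> 'a \<Rightarrow> 'a \<Rightarrow> bool" where
  "nv_support A e p n \<longleftrightarrow> n \<bullet> e \<noteq> 0 \<and> (\<forall>x\<in>A. n \<bullet> x \<le> n \<bullet> p)"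

definition lower_bd :: "'a::euclidean_space set \<Rightarrow> 'a \<Rightarrow> 'a set" where
  "lower_bd A e = {p \<in> frontier A. \<exists>n. nv_support A e p n}"

definition hausdorff_dist :: "'a::metric_space set \<Rightarrow> 'a set \<Rightarrow> ereal" where
  "hausdorff_dist A B =
     max (SUP a\<in>A. ereal (infdist a B)) (SUP b\<in>B. ereal (infdist b A))"

end

theory Submission
  imports Defs
begin

lemma sdirs_cases: "e \<in> sdirs \<Longrightarrow> e \<in> Basis \<or> -e \<in> Basis"
  unfolding sdirs_def by force

lemma sdirs_norm: "e \<in> sdirs \<Longrightarrow> norm e = 1"
  using sdirs_cases by (metis norm_Basis norm_minus_cancel)

lemma sdirs_uminus: "e \<in> sdirs \<Longrightarrow> -e \<in> sdirs"
  unfolding sdirs_def by force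

lemma sdirs_finite: "finite (sdirs :: 'a::euclidean_space set)"
  unfolding sdirs_def by simp

lemma sdirs_nonempty: "(sdirs :: 'a::euclidean_space set) \<noteq> {}"
  unfolding sdirs_def using nonempty_Basis by blast

lemma Vcone_abs:
  assumes e: "e \<in> sdirs" and u: "u \<in> Vcone e" and b: "b \<in> Basis"
  shows "\<bar>u \<bullet> b\<bar> \<le> u \<bullet> e"
proof -
  have ne: "-e \<noteq> e"
  proof
    assume "-e = e"
    then have "2 *\<^sub>R e = 0" by (metis add.right_inverse scaleR_2)
    then have "e = 0" by simp
    then show False using sdirs_norm[OF e] by simp
  qed
  have V: "\<And>e'. e' \<in> sdirs \<Longrightarrow> e' \<noteq> e \<Longrightarrow> u \<bullet> e' \<le> u \<bullet> e" using u unfolding Vcone_def by auto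
  have pos: "u \<bullet> e \<ge> 0" using V[OF sdirs_uminus[OF e] ne] by simp
  have bs: "b \<in> sdirs" "-b \<in> sdirs" using b unfolding sdirs_def by auto
  show ?thesis
  proof (cases "b = e")
    case True then show ?thesis using pos by simp
  next
    case False
    show ?thesis
    proof (cases "-b = e")
      case True then show ?thesis using pos by auto
    next
      case False2: False
      have "u \<bullet> b \<le> u \<bullet> e" using V[OF bs(1) False] .
      moreover have "u \<bullet> (-b) \<le> u \<bullet> e" using V[OF bs(2) False2] .
      ultimately show ?thesis by simp
    qed
  qed
qed

lemma Vcone_pos:
  assumes e: "e \<in> sdirs" and u: "u \<in> Vcone (e::'a::euclidean_space)"
  shows "1 \<le> real DIM('a) * (u \<bullet> e)"
proof -
  have "1 = norm u" using u unfolding Vcone_def by auto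
  also have "\<dots> \<le> (\<Sum>b\<in>Basis. \<bar>u \<bullet> b\<bar>)" by (rule norm_le_l1)
  also have "\<dots> \<le> (\<Sum>b\<in>(Basis::'a set). u \<bullet> e)" by (rule sum_mono) (use Vcone_abs[OF e u] in auto)
  also have "\<dots> = real DIM('a) * (u \<bullet> e)" by simp
  finally show ?thesis .
qed

lemma Vcone_pos': "e \<in> sdirs \<Longrightarrow> u \<in> Vcone e \<Longrightarrow> u \<bullet> e > 0"
proof (rule ccontr)
  assume a: "e \<in> sdirs" "u \<in> Vcone e" "\<not> u \<bullet> e > 0"
  then have "real DIM('a) * (u \<bullet> e) \<le> 0" by (simp add: mult_nonneg_nonpos)
  then show False using Vcone_pos[OF a(1,2)] by linarith
qed

lemma Vcone_norm: "u \<in> Vcone e \<Longrightarrow> norm u = 1"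
  unfolding Vcone_def by auto

lemma supp_upper:
  assumes "compact K" "k \<in> K" shows "u \<bullet> k \<le> supp K u"
proof -
  have "compact ((\<lambda>x. u \<bullet> x) ` K)"
  proof (rule compact_continuous_image)
    show "continuous_on K (\<lambda>x. u \<bullet> x)" by (intro continuous_intros)
  qed (rule assms(1))
  then have "bdd_above ((\<lambda>x. u \<bullet> x) ` K)" by (meson bounded_imp_bdd_above compact_imp_bounded)
  then show ?thesis unfolding supp_def using assms(2) by (simp add: cSUP_upper)
qed

lemma supp_eq:
  assumes "y \<in> K" "\<And>k. k \<in> K \<Longrightarrow> u \<bullet> k \<le> u \<bullet> y" shows "supp K u = u \<bullet> y"
  unfolding supp_def using assms by (intro cSup_eq_maximum) auto

lemma K_Sreg: "compact K \<Longrightarrow> K \<subseteq> Sreg K e"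
  unfolding Sreg_def supp_halfspace_def using supp_upper by blast

lemma closed_Sreg: "closed (Sreg K e)"
  unfolding Sreg_def supp_halfspace_def
  by (intro closed_INT) (simp add: closed_halfspace_le)

lemma convex_Sreg: "convex (Sreg K e)"
  unfolding Sreg_def supp_halfspace_def
  by (intro convex_INT) (simp add: convex_halfspace_le)

lemma Sreg_down:
  assumes e: "e \<in> sdirs" and z: "z \<in> Sreg K e" and s: "s \<ge> 0"
  shows "z - s *\<^sub>R e \<in> Sreg K e"
proof -
  { fix u assume u: "u \<in> Vcone e"
    have "u \<bullet> (z - s *\<^sub>R e) = u \<bullet> z - s * (u \<bullet> e)" by (simp add: inner_diff_right)
    also have "\<dots> \<le> u \<bullet> z" using Vcone_pos'[OF e u] s by simp
    also have "\<dots> \<le> supp K u" using z u unfolding Sreg_def supp_halfspace_def by auto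
    finally have "u \<bullet> (z - s *\<^sub>R e) \<le> supp K u" . }
  then show ?thesis unfolding Sreg_def supp_halfspace_def by auto
qed

lemma vproj_e: "e \<in> sdirs \<Longrightarrow> vproj e (z - s *\<^sub>R e) = vproj e z"
  unfolding vproj_def using sdirs_norm[of e]
  by (simp add: inner_diff_left algebra_simps dot_square_norm)

lemma vproj_orth: "e \<in> sdirs \<Longrightarrow> vproj e z \<bullet> e = 0"
  unfolding vproj_def using sdirs_norm[of e]
  by (simp add: inner_diff_left algebra_simps dot_square_norm)

lemma K_Kreg:
  assumes "compact K" "e \<in> sdirs" "\<alpha> \<ge> 0" shows "K \<subseteq> Kreg K e \<alpha>"
proof
  fix k assume k: "k \<in> K"
  have "k \<in> Sreg K e" using K_Sreg[OF assms(1)] k by blast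
  moreover have "vproj e k \<in> proj_nbhd K e \<alpha>"
  proof -
    have "dist (vproj e k) (vproj e k) \<le> \<alpha>" using assms(3) by simp
    then show ?thesis unfolding proj_nbhd_def using vproj_orth[OF assms(2)] k by blast
  qed
  ultimately show "k \<in> Kreg K e \<alpha>" unfolding Kreg_def by blast
qed

lemma Kreg_down:
  assumes "compact K" "e \<in> sdirs" "\<alpha> \<ge> 0" "y \<in> K" "s \<ge> 0"
  shows "y - s *\<^sub>R e \<in> Kreg K e \<alpha>"
proof -
  have y: "y \<in> Kreg K e \<alpha>" using K_Kreg[OF assms(1-3)] assms(4) by blast
  then have "y - s *\<^sub>R e \<in> Sreg K e" using Sreg_down[OF assms(2) _ assms(5)] unfolding Kreg_def by blast
  moreover have "vproj e (y - s *\<^sub>R e) \<in> proj_nbhd K e \<alpha>"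
    using y unfolding vproj_e[OF assms(2)] Kreg_def by blast
  ultimately show ?thesis unfolding Kreg_def by blast
qed

lemma facets_card_le:
  fixes a :: "'i \<Rightarrow> 'a::euclidean_space" and b :: "'i \<Rightarrow> real"
  assumes I: "finite I" and S: "S = (\<Inter>i\<in>I. {x. a i \<bullet> x \<le> b i})"
    and a0: "\<And>i. i \<in> I \<Longrightarrow> a i \<noteq> 0" and int: "interior S \<noteq> {}"
  shows "card {C. C facet_of S} \<le> card I"
proof -
  define H where "H i = {x. a i \<bullet> x \<le> b i}" for i
  define F where "F = H ` I"
  have finF: "finite F" using I unfolding F_def by simp
  have SF: "S = \<Inter>F" unfolding S F_def H_def by auto
  define r where "r h = (SOME i. i \<in> I \<and> h = H i)" for h
  have r: "r h \<in> I \<and> h = H (r h)" if "h \<in> F" for h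
  proof -
    have "\<exists>i. i \<in> I \<and> h = H i" using that unfolding F_def by auto
    then show ?thesis unfolding r_def by (rule someI_ex)
  qed
  define A where "A h = a (r h)" for h
  define B where "B h = b (r h)" for h
  have AB: "A h \<noteq> 0 \<and> h = {x. A h \<bullet> x \<le> B h}" if "h \<in> F" for h
  proof -
    have ri: "r h \<in> I" using r[OF that] by (rule conjunct1)
    have hH: "h = H (r h)" using r[OF that] by (rule conjunct2)
    have "a (r h) \<noteq> 0" using a0[OF ri] .
    moreover have "h = {x. a (r h) \<bullet> x \<le> b (r h)}" using hH unfolding H_def .
    ultimately show ?thesis unfolding A_def B_def by blast
  qed
  have aff: "affine hull S = UNIV" using int by (rule affine_hull_nonempty_interior)
  have "\<exists>F0. (F0 \<subseteq> F \<and> S = \<Inter>F0) \<and> (\<forall>F'. (F' \<subseteq> F \<and> S = \<Inter>F') \<longrightarrow> card F0 \<le> card F')"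
    by (rule ex_has_least_nat[where k=F and P="\<lambda>F'. F' \<subseteq> F \<and> S = \<Inter>F'" and m=card]) (use SF in simp)
  then obtain F0 where F0: "F0 \<subseteq> F \<and> S = \<Inter>F0"
    and minF0: "\<And>F'. F' \<subseteq> F \<and> S = \<Inter>F' \<Longrightarrow> card F0 \<le> card F'"
    by blast
  have finF0: "finite F0" using finite_subset[OF conjunct1[OF F0] finF] .
  have psub: "S \<subset> affine hull S \<inter> \<Inter>F'" if "F' \<subset> F0" for F'
  proof -
    have sub: "S \<subseteq> \<Inter>F'" using conjunct2[OF F0] psubset_imp_subset[OF that] by (simp add: Inter_anti_mono)
    have ne: "S \<noteq> \<Inter>F'"
    proof
      assume "S = \<Inter>F'"
      have F'F: "F' \<subseteq> F" using psubset_imp_subset[OF that] conjunct1[OF F0] by (rule order_trans)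
      have "card F0 \<le> card F'" by (rule minF0[OF conjI[OF F'F \<open>S = \<Inter>F'\<close>]])
      moreover have "card F' < card F0" using psubset_card_mono[OF finF0 that] .
      ultimately show False by simp
    qed
    show ?thesis unfolding aff Int_UNIV_left using sub ne by (rule psubsetI)
  qed
  have seq: "S = affine hull S \<inter> \<Inter>F0" unfolding aff Int_UNIV_left using F0 by (rule conjunct2)
  have fe: "\<And>C. C facet_of S \<longleftrightarrow> (\<exists>h. h \<in> F0 \<and> C = S \<inter> {x. A h \<bullet> x = B h})"
  proof (rule facet_of_polyhedron_explicit[where a=A and b=B, OF finF0 seq])
    fix h assume "h \<in> F0"
    then have "h \<in> F" using F0 by blast
    then show "A h \<noteq> 0 \<and> h = {x. A h \<bullet> x \<le> B h}" by (rule AB)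
  next
    fix F' assume "F' \<subset> F0"
    then show "S \<subset> affine hull S \<inter> \<Inter>F'" by (rule psub)
  qed
  have "{C. C facet_of S} \<subseteq> (\<lambda>h. S \<inter> {x. A h \<bullet> x = B h}) ` F0" using fe by auto
  then have "card {C. C facet_of S} \<le> card ((\<lambda>h. S \<inter> {x. A h \<bullet> x = B h}) ` F0)"
    by (intro card_mono) (use finF0 in blast)+
  also have "\<dots> \<le> card F0" by (rule card_image_le[OF finF0])
  also have "\<dots> \<le> card F" using F0 finF by (simp add: card_mono)
  also have "\<dots> \<le> card I" unfolding F_def by (rule card_image_le[OF I])
  finally show ?thesis .
qed

lemma vproj_lin: "vproj e (y + c *\<^sub>R u) = vproj e y + c *\<^sub>R vproj e u"
  unfolding vproj_def by (simp add: inner_add_left algebra_simps)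

lemma haus_pt:
  fixes K :: "'a::euclidean_space set" and \<epsilon> :: real
    and h :: "'a \<Rightarrow> 'a \<Rightarrow> 'a" and Q :: "'a \<Rightarrow> 'a set"
  assumes cb: "convex_body K" and eps: "\<epsilon> > 0"
    and aug: "\<And>e p. e \<in> sdirs \<Longrightarrow> p \<in> lower_bd (Kreg K e (2 * \<epsilon>)) e
                 \<Longrightarrow> nv_support (Kreg K e (2 * \<epsilon>)) e p (h e p)"
    and Qsub: "\<And>e. e \<in> sdirs \<Longrightarrow> Q e \<subseteq> lower_bd (Kreg K e (2 * \<epsilon>)) e"
    and stab: "\<And>e q. e \<in> sdirs \<Longrightarrow> q \<in> lower_bd (Kreg K e \<epsilon>) e
                 \<Longrightarrow> \<exists>p\<in>Q e. h e p \<bullet> (q + \<epsilon> *\<^sub>R e) \<ge> h e p \<bullet> p"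
    and xP: "\<And>e p. e \<in> sdirs \<Longrightarrow> p \<in> Q e \<Longrightarrow> h e p \<bullet> x \<le> h e p \<bullet> p"
  shows "infdist x K \<le> \<epsilon>"
proof (rule ccontr)
  assume "\<not> ?thesis"
  then have gt: "infdist x K > \<epsilon>" by simp
  have cK: "compact K" "convex K" "interior K \<noteq> {}" using cb unfolding convex_body_def by auto
  have clK: "closed K" using cK(1) by (rule compact_imp_closed)
  have neK: "K \<noteq> {}" using cK(3) interior_subset by blast
  obtain y where y: "y \<in> K" and ymin: "\<And>k. k \<in> K \<Longrightarrow> dist x y \<le> dist x k"
    using distance_attains_inf[OF clK neK, of x] by blast
  define \<delta> where "\<delta> = dist x y"
  have \<delta>: "\<delta> > \<epsilon>" using infdist_le[OF y, of x] gt unfolding \<delta>_def by linarith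
  have \<delta>pos: "\<delta> > 0" using \<delta> eps by linarith
  define u where "u = (1 / \<delta>) *\<^sub>R (x - y)"
  have xu: "x = y + \<delta> *\<^sub>R u" unfolding u_def using \<delta>pos by simp
  have nu: "norm u = 1" unfolding u_def using \<delta>pos unfolding \<delta>_def by (simp add: dist_norm)
  have ud: "u \<bullet> k \<le> u \<bullet> y" if k: "k \<in> K" for k
  proof -
    have "inner (x - y) (k - y) \<le> 0"
      by (rule any_closest_point_dot[OF cK(2) clK y k]) (use ymin in blast)
    then have "u \<bullet> (k - y) \<le> 0" unfolding u_def using \<delta>pos
        by (simp add: divide_nonpos_pos)
    then show ?thesis by (simp add: inner_diff_right)
  qed
  have suppu: "supp K u = u \<bullet> y" by (rule supp_eq[OF y ud])
  define m where "m = Max ((\<lambda>e. u \<bullet> e) ` sdirs)"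
  have "m \<in> (\<lambda>e. u \<bullet> e) ` sdirs" unfolding m_def
    by (rule Max_in) (use sdirs_finite sdirs_nonempty in auto)
  then obtain e where e: "e \<in> sdirs" and me: "m = u \<bullet> e" by blast
  have emax: "u \<bullet> e' \<le> u \<bullet> e" if "e' \<in> sdirs" for e'
    unfolding me[symmetric] m_def by (rule Max_ge) (use sdirs_finite that in auto)
  have uV: "u \<in> Vcone e" unfolding Vcone_def using nu emax by auto
  have ne: "norm e = 1" by (rule sdirs_norm[OF e])
  have ee: "e \<bullet> e = 1" using ne by (simp add: dot_square_norm)
  have uu: "u \<bullet> u = 1" using nu by (simp add: dot_square_norm)
  define \<tau> where "\<tau> = u \<bullet> e"
  have \<tau>pos: "\<tau> > 0" unfolding \<tau>_def by (rule Vcone_pos'[OF e uV])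
  have \<tau>le: "\<tau> \<le> 1" unfolding \<tau>_def using norm_cauchy_schwarz[of u e] nu ne by simp
  define \<sigma> where "\<sigma> = norm (vproj e u)"
  have \<sigma>0: "\<sigma> \<ge> 0" unfolding \<sigma>_def by simp
  have \<sigma>2: "\<sigma>\<^sup>2 = 1 - \<tau>\<^sup>2"
  proof -
    have "\<sigma>\<^sup>2 = (u - \<tau> *\<^sub>R e) \<bullet> (u - \<tau> *\<^sub>R e)"
      unfolding \<sigma>_def vproj_def \<tau>_def by (simp add: power2_norm_eq_inner)
    also have "\<dots> = u \<bullet> u - 2 * \<tau> * (u \<bullet> e) + \<tau>\<^sup>2 * (e \<bullet> e)"
      by (simp add: inner_diff_left inner_diff_right inner_commute power2_eq_square algebra_simps)
    finally show ?thesis using uu ee unfolding \<tau>_def by (simp add: power2_eq_square)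
  qed
  have \<sigma>1: "\<sigma> < 1"
  proof -
    have "\<sigma>\<^sup>2 < 1" using \<sigma>2 \<tau>pos by simp
    then have "\<bar>\<sigma>\<bar> < 1" by (simp add: abs_square_less_1)
    then show ?thesis by simp
  qed
  define \<epsilon>' where "\<epsilon>' = min \<delta> (2 * \<epsilon> / (1 + \<sigma>))"
  have \<epsilon>'gt: "\<epsilon>' > \<epsilon>"
  proof -
    have "\<epsilon> * (1 + \<sigma>) < 2 * \<epsilon>" using \<sigma>1 eps by simp
    then have "\<epsilon> < 2 * \<epsilon> / (1 + \<sigma>)" using \<sigma>0 by (simp add: less_divide_eq)
    then show ?thesis unfolding \<epsilon>'_def using \<delta> by simp
  qed
  have \<epsilon>'pos: "\<epsilon>' > 0" using \<epsilon>'gt eps by linarith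
  have \<epsilon>'le: "\<epsilon>' \<le> \<delta>" unfolding \<epsilon>'_def by simp
  have \<epsilon>'\<sigma>: "\<epsilon>' * \<sigma> \<le> \<epsilon>"
  proof -
    have "\<epsilon>' * \<sigma> \<le> (2 * \<epsilon> / (1 + \<sigma>)) * \<sigma>"
      unfolding \<epsilon>'_def by (rule mult_right_mono) (use \<sigma>0 in auto)
    also have "\<dots> = (2 * \<epsilon> * \<sigma>) / (1 + \<sigma>)" by simp
    also have "\<dots> \<le> \<epsilon>" using \<sigma>0 \<sigma>1 eps by (simp add: pos_divide_le_eq algebra_simps)
    finally show ?thesis .
  qed
  define w where "w = y + \<epsilon>' *\<^sub>R u"
  define T where "T = {t. w - t *\<^sub>R e \<in> Sreg K e}"
  have Tclosed: "closed T"
  proof -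
    have "T = (\<lambda>t. w - t *\<^sub>R e) -` Sreg K e" unfolding T_def by auto
    moreover have "closed ((\<lambda>t. w - t *\<^sub>R e) -` Sreg K e)"
      by (rule continuous_closed_vimage[OF closed_Sreg]) (intro continuous_intros)
    ultimately show ?thesis by simp
  qed
  have Vpos: "1 \<le> real DIM('a) * (u' \<bullet> e)" if "u' \<in> Vcone e" for u'
    by (rule Vcone_pos[OF e that])
  have Tne: "real DIM('a) * \<epsilon>' \<in> T"
  proof -
    { fix u' assume u': "u' \<in> Vcone e"
      have n1: "norm u' = 1" using Vcone_norm[OF u'] .
      have "u' \<bullet> u \<le> 1" using norm_cauchy_schwarz[of u' u] n1 nu by simp
      have a1: "u' \<bullet> y \<le> supp K u'" by (rule supp_upper[OF cK(1) y])
      have a2: "\<epsilon>' * (u' \<bullet> u) \<le> \<epsilon>'" using \<open>u' \<bullet> u \<le> 1\<close> \<epsilon>'pos by simp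
      have a3: "\<epsilon>' \<le> real DIM('a) * \<epsilon>' * (u' \<bullet> e)"
        using mult_left_mono[OF Vpos[OF u'], of \<epsilon>'] \<epsilon>'pos by (simp add: algebra_simps)
      have "u' \<bullet> (w - (real DIM('a) * \<epsilon>') *\<^sub>R e) = u' \<bullet> y + \<epsilon>' * (u' \<bullet> u) - real DIM('a) * \<epsilon>' * (u' \<bullet> e)"
        unfolding w_def by (simp add: inner_diff_right inner_add_right)
      also have "\<dots> \<le> supp K u'" using a1 a2 a3 by linarith
      finally have "u' \<bullet> (w - (real DIM('a) * \<epsilon>') *\<^sub>R e) \<le> supp K u'" . }
    then show ?thesis unfolding T_def Sreg_def supp_halfspace_def by auto
  qed
  have Tlow: "t \<ge> \<epsilon>'" if t: "t \<in> T" for t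
  proof (rule ccontr)
    assume "\<not> t \<ge> \<epsilon>'"
    then have tl: "t < \<epsilon>'" by simp
    have "t * \<tau> < \<epsilon>'"
    proof (cases "t \<ge> 0")
      case True
      then have "t * \<tau> \<le> t * 1" using \<tau>le by (intro mult_left_mono)
      then show ?thesis using tl by simp
    next
      case False
      then have "t * \<tau> < 0" using \<tau>pos by (simp add: mult_neg_pos)
      then show ?thesis using \<epsilon>'pos by simp
    qed
    moreover have "u \<bullet> (w - t *\<^sub>R e) \<le> supp K u"
      using t uV unfolding T_def Sreg_def supp_halfspace_def by blast
    moreover have "u \<bullet> (w - t *\<^sub>R e) = u \<bullet> y + \<epsilon>' - t * \<tau>"
      unfolding w_def \<tau>_def using uu by (simp add: inner_diff_right inner_add_right)
    ultimately show False using suppu by simp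
  qed
  have bddT: "bdd_below T" unfolding bdd_below_def using Tlow by blast
  have TneE: "T \<noteq> {}" using Tne by blast
  define t0 where "t0 = Inf T"
  have t0T: "t0 \<in> T" unfolding t0_def by (rule closed_contains_Inf[OF TneE bddT Tclosed])
  have t0ge: "t0 \<ge> \<epsilon>'" using Tlow[OF t0T] .
  have t0min: "t0 \<le> t" if "t \<in> T" for t unfolding t0_def by (rule cInf_lower[OF that bddT])
  define q where "q = w - t0 *\<^sub>R e"
  have qS: "q \<in> Sreg K e" using t0T unfolding T_def q_def by simp
  have vq: "vproj e q = vproj e y + \<epsilon>' *\<^sub>R vproj e u"
    unfolding q_def vproj_e[OF e] w_def by (rule vproj_lin)
  have qK: "q \<in> Kreg K e \<epsilon>"
  proof -
    have "dist (vproj e q) (vproj e y) = \<epsilon>' * \<sigma>"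
      unfolding vq \<sigma>_def dist_norm using \<epsilon>'pos by simp
    then have "dist (vproj e q) (vproj e y) \<le> \<epsilon>" using \<epsilon>'\<sigma> by simp
    then have "vproj e q \<in> proj_nbhd K e \<epsilon>" unfolding proj_nbhd_def using vproj_orth[OF e] y by blast
    then show ?thesis unfolding Kreg_def using qS by blast
  qed
  have qnotint: "q \<notin> interior (Sreg K e)"
  proof
    assume "q \<in> interior (Sreg K e)"
    then obtain r where r: "r > 0" "ball q r \<subseteq> Sreg K e" by (meson mem_interior)
    have "q + (r/2) *\<^sub>R e \<in> ball q r" using r(1) ne by (simp add: dist_norm)
    then have "q + (r/2) *\<^sub>R e \<in> Sreg K e" using r(2) by blast
    moreover have "q + (r/2) *\<^sub>R e = w - (t0 - r/2) *\<^sub>R e" unfolding q_def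
      by (simp add: algebra_simps)
    ultimately have "w - (t0 - r/2) *\<^sub>R e \<in> Sreg K e" by simp
    then have "t0 - r/2 \<in> T" unfolding T_def by simp
    then have "t0 \<le> t0 - r/2" by (rule t0min)
    then show False using r(1) by simp
  qed
  have KS: "K \<subseteq> Sreg K e" by (rule K_Sreg[OF cK(1)])
  have affS: "affine hull (Sreg K e) = UNIV"
  proof (rule affine_hull_nonempty_interior)
    show "interior (Sreg K e) \<noteq> {}" using interior_mono[OF KS] cK(3) by blast
  qed
  have riS: "rel_interior (Sreg K e) = interior (Sreg K e)" by (rule rel_interior_interior[OF affS])
  have clS: "closure (Sreg K e) = Sreg K e" by (rule closure_closed[OF closed_Sreg])
  have qcl: "q \<in> closure (Sreg K e)" using qS clS by simp
  have qri: "q \<notin> rel_interior (Sreg K e)" using qnotint riS by simp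
  obtain a where a0: "a \<noteq> 0" and asup: "\<And>z. z \<in> closure (Sreg K e) \<Longrightarrow> a \<bullet> q \<le> a \<bullet> z"
    by (rule supporting_hyperplane_relative_frontier[OF convex_Sreg qcl qri]) blast
  define a' where "a' = - a"
  have asup': "a' \<bullet> z \<le> a' \<bullet> q" if "z \<in> Sreg K e" for z
    using asup[of z] that clS unfolding a'_def by simp
  have a'e: "a' \<bullet> e \<noteq> 0"
  proof
    assume ae: "a' \<bullet> e = 0"
    define z where "z = q - (real DIM('a) * norm a') *\<^sub>R e + a'"
    have "z \<in> Sreg K e"
    proof -
      { fix u' assume u': "u' \<in> Vcone e"
        have n1: "norm u' = 1" using Vcone_norm[OF u'] .
        have b1: "u' \<bullet> a' \<le> norm a'" using norm_cauchy_schwarz[of u' a'] n1 by simp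
        have b2: "norm a' \<le> real DIM('a) * norm a' * (u' \<bullet> e)"
          using mult_left_mono[OF Vpos[OF u'], of "norm a'"] by (simp add: algebra_simps)
        have b3: "u' \<bullet> q \<le> supp K u'" using qS u' unfolding Sreg_def supp_halfspace_def by blast
        have "u' \<bullet> z = u' \<bullet> q - real DIM('a) * norm a' * (u' \<bullet> e) + u' \<bullet> a'"
          unfolding z_def by (simp add: inner_diff_right inner_add_right)
        also have "\<dots> \<le> supp K u'" using b1 b2 b3 by linarith
        finally have "u' \<bullet> z \<le> supp K u'" . }
      then show ?thesis unfolding Sreg_def supp_halfspace_def by auto
    qed
    then have "a' \<bullet> z \<le> a' \<bullet> q" by (rule asup')
    moreover have "a' \<bullet> z = a' \<bullet> q + a' \<bullet> a'"
      unfolding z_def using ae by (simp add: inner_diff_right inner_add_right)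
    ultimately have "a' \<bullet> a' \<le> 0" by simp
    then have "a' = 0" using inner_gt_zero_iff[of a'] by linarith
    then show False using a0 unfolding a'_def by simp
  qed
  have KregS: "Kreg K e \<alpha> \<subseteq> Sreg K e" for \<alpha> unfolding Kreg_def by blast
  have qlb: "q \<in> lower_bd (Kreg K e \<epsilon>) e"
  proof -
    have "q \<in> closure (Kreg K e \<epsilon>)" using qK closure_subset by blast
    moreover have "q \<notin> interior (Kreg K e \<epsilon>)" using qnotint interior_mono[OF KregS] by blast
    ultimately have "q \<in> frontier (Kreg K e \<epsilon>)" unfolding frontier_def by blast
    moreover have "nv_support (Kreg K e \<epsilon>) e q a'"
      unfolding nv_support_def using a'e asup' KregS by blast
    ultimately show ?thesis unfolding lower_bd_def by blast
  qed
  obtain p where pQ: "p \<in> Q e" and pst: "h e p \<bullet> (q + \<epsilon> *\<^sub>R e) \<ge> h e p \<bullet> p"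
    using stab[OF e qlb] by blast
  define n where "n = h e p"
  have nv: "nv_support (Kreg K e (2 * \<epsilon>)) e p n"
    unfolding n_def by (rule aug[OF e]) (use Qsub[OF e] pQ in blast)
  have nle: "n \<bullet> z \<le> n \<bullet> p" if "z \<in> Kreg K e (2 * \<epsilon>)" for z
    using nv that unfolding nv_support_def by blast
  have ne0: "n \<bullet> e \<noteq> 0" using nv unfolding nv_support_def by blast
  have nyp: "n \<bullet> y \<le> n \<bullet> p" using nle K_Kreg[OF cK(1) e, of "2 * \<epsilon>"] eps y by auto
  have npos: "n \<bullet> e > 0"
  proof (rule ccontr)
    assume "\<not> n \<bullet> e > 0"
    then have neg: "n \<bullet> e < 0" using ne0 by simp
    define s where "s = (n \<bullet> p - n \<bullet> y + 1) / (- (n \<bullet> e))"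
    have s0: "s \<ge> 0" unfolding s_def using neg nyp by (simp add: divide_nonneg_neg)
    have "y - s *\<^sub>R e \<in> Kreg K e (2 * \<epsilon>)" by (rule Kreg_down[OF cK(1) e _ y s0]) (use eps in simp)
    then have "n \<bullet> (y - s *\<^sub>R e) \<le> n \<bullet> p" by (rule nle)
    moreover have "n \<bullet> (y - s *\<^sub>R e) = n \<bullet> y - s * (n \<bullet> e)" by (simp add: inner_diff_right)
    moreover have "s * (n \<bullet> e) = - (n \<bullet> p - n \<bullet> y + 1)" unfolding s_def using neg by simp
    ultimately show False by simp
  qed
  have nw: "n \<bullet> w > n \<bullet> p"
  proof -
    have w_eq: "w = q + t0 *\<^sub>R e" unfolding q_def by simp
    have "n \<bullet> q + \<epsilon> * (n \<bullet> e) \<ge> n \<bullet> p" using pst unfolding n_def by (simp add: inner_add_right)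
    moreover have "\<epsilon> * (n \<bullet> e) < t0 * (n \<bullet> e)" using npos \<epsilon>'gt t0ge by simp
    moreover have "n \<bullet> w = n \<bullet> q + t0 * (n \<bullet> e)" unfolding w_eq by (simp add: inner_add_right)
    ultimately show ?thesis by linarith
  qed
  have nupos: "n \<bullet> u > 0"
  proof -
    have "n \<bullet> w = n \<bullet> y + \<epsilon>' * (n \<bullet> u)" unfolding w_def by (simp add: inner_add_right)
    then have "\<epsilon>' * (n \<bullet> u) > 0" using nw nyp by linarith
    then show ?thesis using \<epsilon>'pos by (simp add: zero_less_mult_iff)
  qed
  have "n \<bullet> x > n \<bullet> p"
  proof -
    have "\<epsilon>' * (n \<bullet> u) \<le> \<delta> * (n \<bullet> u)" using \<epsilon>'le nupos by (simp add: mult_right_mono)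
    moreover have "n \<bullet> x = n \<bullet> y + \<delta> * (n \<bullet> u)" unfolding xu by (simp add: inner_add_right)
    moreover have "n \<bullet> w = n \<bullet> y + \<epsilon>' * (n \<bullet> u)" unfolding w_def by (simp add: inner_add_right)
    ultimately show ?thesis using nw by linarith
  qed
  moreover have "n \<bullet> x \<le> n \<bullet> p" unfolding n_def by (rule xP[OF e pQ])
  ultimately show False by simp
qed

theorem lemma7:
  fixes K :: "'a::euclidean_space set" and \<epsilon> :: real
    and h :: "'a \<Rightarrow> 'a \<Rightarrow> 'a" and Q :: "'a \<Rightarrow> 'a set"
  assumes "convex_body K" and "\<epsilon> > 0"
    and aug: "\<And>e p. e \<in> sdirs \<Longrightarrow> p \<in> lower_bd (Kreg K e (2 * \<epsilon>)) e
                 \<Longrightarrow> nv_support (Kreg K e (2 * \<epsilon>)) e p (h e p)"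
    and Qsub: "\<And>e. e \<in> sdirs \<Longrightarrow> Q e \<subseteq> lower_bd (Kreg K e (2 * \<epsilon>)) e"
    and stab: "\<And>e q. e \<in> sdirs \<Longrightarrow> q \<in> lower_bd (Kreg K e \<epsilon>) e
                 \<Longrightarrow> \<exists>p\<in>Q e. h e p \<bullet> (q + \<epsilon> *\<^sub>R e) \<ge> h e p \<bullet> p"
  defines "P \<equiv> (\<Inter>e\<in>sdirs. \<Inter>p\<in>Q e. {x. h e p \<bullet> x \<le> h e p \<bullet> p})"
  shows "K \<subseteq> P \<and> hausdorff_dist K P \<le> ereal \<epsilon> \<and>
         ((\<forall>e\<in>sdirs. finite (Q e)) \<longrightarrow>
            card {F. F facet_of P} \<le> (\<Sum>e\<in>sdirs. card (Q e)))"
proof -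
  have cK: "compact K" "interior K \<noteq> {}" using assms(1) unfolding convex_body_def by auto
  have nvp: "nv_support (Kreg K e (2 * \<epsilon>)) e p (h e p)" if "e \<in> sdirs" "p \<in> Q e" for e p
    using aug[OF that(1)] Qsub[OF that(1)] that(2) by blast
  have KP: "K \<subseteq> P"
  proof
    fix k assume k: "k \<in> K"
    { fix e p assume ep: "e \<in> sdirs" "p \<in> Q e"
      have "k \<in> Kreg K e (2 * \<epsilon>)" using K_Kreg[OF cK(1) ep(1), of "2 * \<epsilon>"] assms(2) k by auto
      then have "h e p \<bullet> k \<le> h e p \<bullet> p" using nvp[OF ep] unfolding nv_support_def by blast }
    then show "k \<in> P" unfolding P_def by blast
  qed
  have xP: "infdist x K \<le> \<epsilon>" if x: "x \<in> P" for x
  proof (rule haus_pt[OF assms(1,2) aug Qsub stab])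
    fix e p assume "e \<in> sdirs" "p \<in> Q e"
    then show "h e p \<bullet> x \<le> h e p \<bullet> p" using x unfolding P_def by blast
  qed
  have HD: "hausdorff_dist K P \<le> ereal \<epsilon>"
    unfolding hausdorff_dist_def max.bounded_iff
  proof
    show "(SUP a\<in>K. ereal (infdist a P)) \<le> ereal \<epsilon>"
    proof (rule SUP_least)
      fix a assume "a \<in> K"
      then have "a \<in> P" using KP by blast
      then show "ereal (infdist a P) \<le> ereal \<epsilon>" using assms(2) by simp
    qed
    show "(SUP b\<in>P. ereal (infdist b K)) \<le> ereal \<epsilon>"
    proof (rule SUP_least)
      fix b assume "b \<in> P"
      then show "ereal (infdist b K) \<le> ereal \<epsilon>" using xP by simp
    qed
  qed
  have FC: "card {F. F facet_of P} \<le> (\<Sum>e\<in>sdirs. card (Q e))" if fin: "\<forall>e\<in>sdirs. finite (Q e)"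
  proof -
    define I where "I = Sigma sdirs Q"
    have finI: "finite I" unfolding I_def using sdirs_finite fin by (intro finite_SigmaI) auto
    have Peq: "P = (\<Inter>i\<in>I. {x. (case i of (e, p) \<Rightarrow> h e p) \<bullet> x \<le> (case i of (e, p) \<Rightarrow> h e p \<bullet> p)})"
      unfolding P_def I_def by auto
    have a0: "(case i of (e, p) \<Rightarrow> h e p) \<noteq> 0" if "i \<in> I" for i
    proof -
      obtain e p where i: "i = (e, p)" "e \<in> sdirs" "p \<in> Q e" using \<open>i \<in> I\<close> unfolding I_def by blast
      have "h e p \<bullet> e \<noteq> 0" using nvp[OF i(2,3)] unfolding nv_support_def by blast
      then show ?thesis using i(1) by auto
    qed
    have intP: "interior P \<noteq> {}" using interior_mono[OF KP] cK(2) by blast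
    have "card {F. F facet_of P} \<le> card I" by (rule facets_card_le[OF finI Peq a0 intP])
    also have "card I = (\<Sum>e\<in>sdirs. card (Q e))" unfolding I_def
      by (rule card_SigmaI) (use sdirs_finite fin in auto)
    finally show ?thesis .
  qed
  show ?thesis using KP HD FC by blast
qed

end
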